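(* For every state $\rho$, $C_f^{\mathcal U}(\rho)\ge2\max_{i\neq j}|\rho_{ij}|$. Moreover, for every single-qubit state $\rho=\begin{pmatrix}p&z\\ z^*&1-p\end{pmatrix}$, \[ C_f^{\mathcal U}(\rho)=\begin{cases}2|z| & \text{if } |z|\le\min\{p,1-p\},\\ +\infty&\text{otherwise.}\end{cases} \]
   Context: Fixed computational basis; logs base 2. $\mathcal U_k$ is the set of uniformly coherent states $|\Psi\rangle=k^{-1/2}\sum_{j\in J}e^{i\theta_j}|j\rangle$ with $|J|=k$, $\theta_j\in\mathbb R$. $C_f^{\mathcal U}(\rho)=\inf\{\sum_\alpha p_\alpha\log k_\alpha:\rho=\sum_\alpha p_\alpha|\Psi_\alpha\rangle\langle\Psi_\alpha|,\ |\Psi_\alpha\rangle\in\mathcal U_{k_\alpha}\}$ over finite convex decompositions, and $+\infty$ if none exists. *)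

theory Defs
  imports Complex_Main "HOL-Library.Extended_Real" "HOL-Library.Numeral_Type"
begin

text \<open>Matrices in the fixed computational basis indexed by a finite type 'n;
  vectors are functions 'n => complex.\<close>

definition is_state :: "('n::finite \<Rightarrow> 'n \<Rightarrow> complex) \<Rightarrow> bool" where
  "is_state \<rho> \<longleftrightarrow>
     (\<forall>i j. \<rho> i j = cnj (\<rho> j i)) \<and>
     (\<forall>v::'n \<Rightarrow> complex. Im (\<Sum>i\<in>UNIV. \<Sum>j\<in>UNIV. cnj (v i) * \<rho> i j * v j) = 0 \<and>
                          Re (\<Sum>i\<in>UNIV. \<Sum>j\<in>UNIV. cnj (v i) * \<rho> i j * v j) \<ge> 0) \<and>
     (\<Sum>i\<in>UNIV. \<rho> i i) = 1"

definition unif_coh :: "nat \<Rightarrow> ('n::finite \<Rightarrow> complex) \<Rightarrow> bool" where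
  "unif_coh k \<psi> \<longleftrightarrow>
     (\<exists>J \<theta>. J \<noteq> {} \<and> card J = k \<and>
        (\<forall>j. \<psi> j = (if j \<in> J then complex_of_real (1 / sqrt (real k)) * cis (\<theta> j) else 0)))"

text \<open>C_f^U: infimum of sum_a p_a log2 k_a over finite convex decompositions into
  uniformly coherent pure states; Inf of the empty set is +infinity.\<close>
definition CfU :: "('n::finite \<Rightarrow> 'n \<Rightarrow> complex) \<Rightarrow> ereal" where
  "CfU \<rho> = Inf {ereal (\<Sum>a\<in>A. p a * log 2 (real (k a))) | A p k \<psi>.
      finite (A :: nat set) \<and>
      (\<forall>a\<in>A. p a \<ge> 0 \<and> unif_coh (k a) (\<psi> a)) \<and>
      (\<Sum>a\<in>A. p a) = 1 \<and>
      (\<forall>i j. \<rho> i j = (\<Sum>a\<in>A. complex_of_real (p a) * \<psi> a i * cnj (\<psi> a j)))}"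

definition qubit_mat :: "real \<Rightarrow> complex \<Rightarrow> 2 \<Rightarrow> 2 \<Rightarrow> complex" where
  "qubit_mat p z i j =
     (if i = 0 \<and> j = 0 then complex_of_real p
      else if i = 0 \<and> j = 1 then z
      else if i = 1 \<and> j = 0 then cnj z
      else complex_of_real (1 - p))"

end

theory Submission
  imports Defs
begin

lemma ex2: fixes x :: 2 shows "x = 0 \<or> x = 1"
proof (induct x)
  case (of_int z)
  then have "z = 0 | z = 1" by fastforce
  then show ?case by auto
qed

lemma uc_k: assumes "unif_coh k (\<psi>::'n::finite \<Rightarrow> complex)" shows "k \<ge> 1"
proof -
  obtain J :: "'n set" where "J \<noteq> {}" "card J = k" using assms unfolding unif_coh_def by blast
  moreover have "finite J" by simp
  ultimately show ?thesis using card_gt_0_iff[of J] by linarith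
qed

lemma uc_off: assumes "unif_coh k (\<psi>::'n::finite \<Rightarrow> complex)" "i \<noteq> j"
  shows "2 * cmod (\<psi> i * cnj (\<psi> j)) \<le> log 2 (real k)"
proof -
  obtain J \<theta> where J: "J \<noteq> {}" "card J = k"
    "\<forall>j. \<psi> j = (if j \<in> J then complex_of_real (1 / sqrt (real k)) * cis (\<theta> j) else 0)"
    using assms unfolding unif_coh_def by blast
  have k1: "k \<ge> 1" using uc_k assms(1) by blast
  show ?thesis
  proof (cases "i \<in> J \<and> j \<in> J")
    case True
    have "card {i,j} \<le> card J" using True by (intro card_mono) auto
    then have k2: "k \<ge> 2" using assms(2) J(2) by simp
    have "cmod (\<psi> i * cnj (\<psi> j)) = 1 / real k"
      using True J(3) k1 by (simp add: norm_mult norm_divide norm_power)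
    moreover have "2 / real k \<le> 1" using k2 by simp
    moreover have "1 \<le> log 2 (real k)" using k2 by simp
    ultimately show ?thesis by simp
  next
    case False
    then have e: "cmod (\<psi> i * cnj (\<psi> j)) = 0" using J(3) by auto
    have "0 \<le> log 2 (real k)" using k1 by simp
    then show ?thesis using e by linarith
  qed
qed

lemma uc_diag: assumes "unif_coh k (\<psi>::'n::finite \<Rightarrow> complex)"
  shows "cmod (\<psi> i * cnj (\<psi> j)) \<le> Re (\<psi> i * cnj (\<psi> i))"
proof -
  obtain J \<theta> where J: "J \<noteq> {}" "card J = k"
    "\<forall>j. \<psi> j = (if j \<in> J then complex_of_real (1 / sqrt (real k)) * cis (\<theta> j) else 0)"
    using assms unfolding unif_coh_def by blast
  have k1: "k \<ge> 1" using uc_k assms(1) by blast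
  have r: "Re (\<psi> i * cnj (\<psi> i)) = (cmod (\<psi> i))^2"
    by (simp only: complex_mult_cnj Re_complex_of_real cmod_power2)
  show ?thesis
  proof (cases "i \<in> J \<and> j \<in> J")
    case True
    then show ?thesis unfolding r using J(3) by (simp add: norm_mult norm_divide power2_eq_square)
  next
    case False
    then have e: "cmod (\<psi> i * cnj (\<psi> j)) = 0" using J(3) by auto
    show ?thesis unfolding r e by simp
  qed
qed

lemma lower:
  fixes \<rho> :: "'n::finite \<Rightarrow> 'n \<Rightarrow> complex"
  assumes "\<forall>a\<in>A. p a \<ge> 0 \<and> unif_coh (k a) (\<psi> a)"
    "\<forall>i j. \<rho> i j = (\<Sum>a\<in>A. complex_of_real (p a) * \<psi> a i * cnj (\<psi> a j))"
    "i \<noteq> j"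
  shows "2 * cmod (\<rho> i j) \<le> (\<Sum>a\<in>A. p a * log 2 (real (k a)))"
proof -
  have "2 * cmod (\<rho> i j) \<le> 2 * (\<Sum>a\<in>A. cmod (complex_of_real (p a) * \<psi> a i * cnj (\<psi> a j)))"
    unfolding assms(2)[rule_format] by (intro mult_left_mono norm_sum) auto
  also have "\<dots> = (\<Sum>a\<in>A. p a * (2 * cmod (\<psi> a i * cnj (\<psi> a j))))"
    unfolding sum_distrib_left
    by (intro sum.cong refl) (use assms(1) in \<open>auto simp: norm_mult mult.assoc\<close>)
  also have "\<dots> \<le> (\<Sum>a\<in>A. p a * log 2 (real (k a)))"
    using assms(1) uc_off[OF _ assms(3)] by (intro sum_mono mult_left_mono) auto
  finally show ?thesis .
qed

lemma diagb:
  fixes \<rho> :: "'n::finite \<Rightarrow> 'n \<Rightarrow> complex"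
  assumes "\<forall>a\<in>A. p a \<ge> 0 \<and> unif_coh (k a) (\<psi> a)"
    "\<forall>i j. \<rho> i j = (\<Sum>a\<in>A. complex_of_real (p a) * \<psi> a i * cnj (\<psi> a j))"
  shows "cmod (\<rho> i j) \<le> Re (\<rho> i i)"
proof -
  have "cmod (\<rho> i j) \<le> (\<Sum>a\<in>A. cmod (complex_of_real (p a) * \<psi> a i * cnj (\<psi> a j)))"
    unfolding assms(2)[rule_format] by (intro norm_sum)
  also have "\<dots> = (\<Sum>a\<in>A. p a * cmod (\<psi> a i * cnj (\<psi> a j)))"
    by (intro sum.cong refl) (use assms(1) in \<open>auto simp: norm_mult mult.assoc\<close>)
  also have "\<dots> \<le> (\<Sum>a\<in>A. p a * Re (\<psi> a i * cnj (\<psi> a i)))"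
    proof (intro sum_mono mult_left_mono)
    fix a assume "a \<in> A"
    then show "cmod (\<psi> a i * cnj (\<psi> a j)) \<le> Re (\<psi> a i * cnj (\<psi> a i))" "0 \<le> p a"
      using assms(1) uc_diag by blast+
  qed
  also have "\<dots> = Re (\<rho> i i)"
    unfolding assms(2)[rule_format] Re_sum
    by (intro sum.cong refl) (simp add: mult.assoc)
  finally show ?thesis .
qed

lemma CfU_lower:
  fixes \<rho> :: "'n::finite \<Rightarrow> 'n \<Rightarrow> complex"
  assumes "i \<noteq> j"
  shows "ereal (2 * cmod (\<rho> i j)) \<le> CfU \<rho>"
  unfolding CfU_def
proof (rule Inf_greatest)
  fix x assume "x \<in> {ereal (\<Sum>a\<in>A. p a * log 2 (real (k a))) | A p k \<psi>.
      finite (A :: nat set) \<and>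
      (\<forall>a\<in>A. p a \<ge> 0 \<and> unif_coh (k a) (\<psi> a)) \<and>
      (\<Sum>a\<in>A. p a) = 1 \<and>
      (\<forall>i j. \<rho> i j = (\<Sum>a\<in>A. complex_of_real (p a) * \<psi> a i * cnj (\<psi> a j)))}"
  then show "ereal (2 * cmod (\<rho> i j)) \<le> x"
  proof (elim CollectE exE conjE)
    fix A :: "nat set" and p :: "nat \<Rightarrow> real" and k :: "nat \<Rightarrow> nat" and \<psi> :: "nat \<Rightarrow> 'n \<Rightarrow> complex"
    assume x: "x = ereal (\<Sum>a\<in>A. p a * log 2 (real (k a)))"
      and h1: "\<forall>a\<in>A. p a \<ge> 0 \<and> unif_coh (k a) (\<psi> a)"
      and h2: "\<forall>i j. \<rho> i j = (\<Sum>a\<in>A. complex_of_real (p a) * \<psi> a i * cnj (\<psi> a j))"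
    show "ereal (2 * cmod (\<rho> i j)) \<le> x" unfolding x using lower[OF h1 h2 assms] by simp
  qed
qed

lemma CfU_inf:
  fixes \<rho> :: "'n::finite \<Rightarrow> 'n \<Rightarrow> complex"
  assumes "cmod (\<rho> i j) > Re (\<rho> i i)"
  shows "CfU \<rho> = \<infinity>"
proof -
  have e: "{ereal (\<Sum>a\<in>A. p a * log 2 (real (k a))) | A p k \<psi>.
      finite (A :: nat set) \<and>
      (\<forall>a\<in>A. p a \<ge> 0 \<and> unif_coh (k a) (\<psi> a)) \<and>
      (\<Sum>a\<in>A. p a) = 1 \<and>
      (\<forall>i j. \<rho> i j = (\<Sum>a\<in>A. complex_of_real (p a) * \<psi> a i * cnj (\<psi> a j)))} = {}"
  proof (rule equals0I)
    fix x assume "x \<in> {ereal (\<Sum>a\<in>A. p a * log 2 (real (k a))) | A p k \<psi>.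
      finite (A :: nat set) \<and>
      (\<forall>a\<in>A. p a \<ge> 0 \<and> unif_coh (k a) (\<psi> a)) \<and>
      (\<Sum>a\<in>A. p a) = 1 \<and>
      (\<forall>i j. \<rho> i j = (\<Sum>a\<in>A. complex_of_real (p a) * \<psi> a i * cnj (\<psi> a j)))}"
    then show False
    proof (elim CollectE exE conjE)
      fix A :: "nat set" and p :: "nat \<Rightarrow> real" and k :: "nat \<Rightarrow> nat" and \<psi> :: "nat \<Rightarrow> 'n \<Rightarrow> complex"
      assume h1: "\<forall>a\<in>A. p a \<ge> 0 \<and> unif_coh (k a) (\<psi> a)"
        and h2: "\<forall>i j. \<rho> i j = (\<Sum>a\<in>A. complex_of_real (p a) * \<psi> a i * cnj (\<psi> a j))"
      have "cmod (\<rho> i j) \<le> Re (\<rho> i i)" by (rule diagb[OF h1 h2])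
      with assms show False by simp
    qed
  qed
  show ?thesis unfolding CfU_def e by (simp add: top_ereal_def)
qed


lemma qubit_upper:
  assumes "cmod z \<le> p" "cmod z \<le> 1 - p"
  shows "CfU (qubit_mat p z) \<le> ereal (2 * cmod z)"
proof -
  define pp :: "nat \<Rightarrow> real" where "pp = (\<lambda>a::nat. if a = 0 then 2 * cmod z else if a = 1 then p - cmod z else 1 - p - cmod z)"
  define kk :: "nat \<Rightarrow> nat" where "kk = (\<lambda>a::nat. if a = 0 then 2 else (1::nat))"
  define th :: "2 \<Rightarrow> real" where "th = (\<lambda>i::2. if i = 0 then Arg z else 0)"
  define ps :: "nat \<Rightarrow> 2 \<Rightarrow> complex" where "ps = (\<lambda>(a::nat) (i::2). if a = 0 then complex_of_real (1 / sqrt (real 2)) * cis (th i)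
        else if a = 1 then (if i = 0 then 1 else 0) else (if i = 1 then 1 else 0))"
  have n01: "(0::2) \<noteq> 1" by simp
  have u0: "unif_coh (kk 0) (ps 0)"
    unfolding unif_coh_def kk_def ps_def
    by (rule exI[of _ UNIV], rule exI[of _ th]) simp
  have u1: "unif_coh (kk 1) (ps 1)"
    unfolding unif_coh_def kk_def ps_def
    by (rule exI[of _ "{0}"], rule exI[of _ "\<lambda>_. 0"]) simp
  have u2: "unif_coh (kk 2) (ps 2)"
    unfolding unif_coh_def kk_def ps_def
    by (rule exI[of _ "{1}"], rule exI[of _ "\<lambda>_. 0"]) (use n01 in auto)
  have zz: "complex_of_real (cmod z) * cis (Arg z) = z"
    using rcis_cmod_Arg[of z] by (simp add: rcis_def)
  have zc: "complex_of_real (cmod z) * cis (- Arg z) = cnj z"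
    using arg_cong[OF zz, of cnj] by (simp add: cis_cnj)
  have half: "complex_of_real (2 * cmod z) * (complex_of_real (1 / sqrt 2) * complex_of_real (1 / sqrt 2))
      = complex_of_real (cmod z)"
    by (simp flip: of_real_mult) (simp add: mult.commute)
  have mat: "\<forall>i j. qubit_mat p z i j = (\<Sum>a\<in>{0,1,2}. complex_of_real (pp a) * ps a i * cnj (ps a j))"
  proof (intro allI)
    fix i j :: 2
    have A: "(\<Sum>a\<in>{0,1,2::nat}. f a) = f 0 + f 1 + f 2" for f :: "nat \<Rightarrow> complex" by simp
    show "qubit_mat p z i j = (\<Sum>a\<in>{0,1,2}. complex_of_real (pp a) * ps a i * cnj (ps a j))"
      using ex2[of i] ex2[of j]
    proof (elim disjE)
      assume "i = 0" "j = 0" then show ?thesis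
        using half by (simp add: A qubit_mat_def pp_def ps_def th_def cis_cnj cis_mult flip: of_real_mult)
    next
      assume "i = 0" "j = 1" then show ?thesis
        using half zz zc n01 by (simp add: A qubit_mat_def pp_def ps_def th_def cis_cnj cis_mult flip: of_real_mult)
    next
      assume "i = 1" "j = 0" then show ?thesis
        using half zz zc n01 by (simp add: A qubit_mat_def pp_def ps_def th_def cis_cnj cis_mult flip: of_real_mult)
    next
      assume "i = 1" "j = 1" then show ?thesis
        using half n01 by (simp add: A qubit_mat_def pp_def ps_def th_def cis_cnj cis_mult flip: of_real_mult)
    qed
  qed
  have mem: "ereal (\<Sum>a\<in>{0,1,2}. pp a * log 2 (real (kk a))) \<in> {ereal (\<Sum>a\<in>A. q a * log 2 (real (k a))) | A q k \<psi>.
      finite (A :: nat set) \<and>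
      (\<forall>a\<in>A. q a \<ge> 0 \<and> unif_coh (k a) (\<psi> a)) \<and>
      (\<Sum>a\<in>A. q a) = 1 \<and>
      (\<forall>i j. qubit_mat p z i j = (\<Sum>a\<in>A. complex_of_real (q a) * \<psi> a i * cnj (\<psi> a j)))}"
    apply (rule CollectI)
    apply (rule exI[of _ "{0,1,2}"], rule exI[of _ pp], rule exI[of _ kk], rule exI[of _ ps])
    using u0 u1 u2 mat assms by (auto simp: pp_def)
  have "(\<Sum>a\<in>{0,1,2}. pp a * log 2 (real (kk a))) = 2 * cmod z"
    by (simp add: pp_def kk_def)
  then show ?thesis using Inf_lower[OF mem] unfolding CfU_def by simp
qed

theorem proposition4:
  shows "(\<forall>\<rho> :: 'n::finite \<Rightarrow> 'n \<Rightarrow> complex. is_state \<rho> \<longrightarrow>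
            (\<forall>i j. i \<noteq> j \<longrightarrow> ereal (2 * cmod (\<rho> i j)) \<le> CfU \<rho>))
       \<and> (\<forall>(p::real) (z::complex). is_state (qubit_mat p z) \<longrightarrow>
            CfU (qubit_mat p z) =
              (if cmod z \<le> min p (1 - p) then ereal (2 * cmod z) else \<infinity>))"
proof (intro conjI allI impI)
  fix \<rho> :: "'n::finite \<Rightarrow> 'n \<Rightarrow> complex" and i j :: 'n
  assume "i \<noteq> j"
  then show "ereal (2 * cmod (\<rho> i j)) \<le> CfU \<rho>" by (rule CfU_lower)
next
  fix p :: real and z :: complex
  have n01: "(0::2) \<noteq> 1" by simp
  show "CfU (qubit_mat p z) =
              (if cmod z \<le> min p (1 - p) then ereal (2 * cmod z) else \<infinity>)"
  proof (cases "cmod z \<le> min p (1 - p)")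
    case True
    then have "CfU (qubit_mat p z) \<le> ereal (2 * cmod z)" by (intro qubit_upper) auto
    moreover have "ereal (2 * cmod (qubit_mat p z 0 1)) \<le> CfU (qubit_mat p z)"
      using n01 by (rule CfU_lower)
    ultimately show ?thesis using True n01 by (simp add: qubit_mat_def)
  next
    case False
    then consider "cmod z > p" | "cmod z > 1 - p" by linarith
    then have "CfU (qubit_mat p z) = \<infinity>"
    proof cases
      case 1 then show ?thesis using n01 by (intro CfU_inf[of _ 0 1]) (simp add: qubit_mat_def)
    next
      case 2 then show ?thesis using n01 by (intro CfU_inf[of _ 1 0]) (simp add: qubit_mat_def)
    qed
    then show ?thesis using False by simp
  qed
qed

end
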